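(* Let $\mathbb{T}$ be a time scale, $I\subseteq\mathbb{R}$ an interval, $I_{\mathbb{T}}:=I\cap\mathbb{T}$, $t_0\in I_{\mathbb{T}}$, and let $p,q$ be real-valued right-dense continuous functions. Let $p_1,q_1\ge0$ be constants with $|p(t)|\le p_1$ and $|q(t)|\le q_1$ for all $t\in I_{\mathbb{T}}^{\kappa^2}$ with $t\ge t_0$, and set $k_1:=1+p_1+q_1$. If $y$ is any solution on $I_{\mathbb{T}}$ of $$y^{\Delta\Delta}(t)+p(t)y^{\Delta}(t)+q(t)y(t)=0,$$ then $$\|y(t)\|_2\le \|y(t_0)\|_2\, e_{k_1}(t,t_0)\qquad\text{for all } t\in I_{\mathbb{T}},\ t\ge t_0,$$ where $\|y(t)\|_2:=\big((y(t))^2+(y^\Delta(t))^2\big)^{1/2}$.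
   Context: A time scale $\mathbb{T}$ is a nonempty closed subset of $\mathbb{R}$; $\sigma(t):=\inf\{s\in\mathbb{T}:s>t\}$, $\mu(t):=\sigma(t)-t$, $y^\sigma=y\circ\sigma$, delta derivative $y^\Delta(t):=\lim_{s\to t}\frac{y^\sigma(t)-y(s)}{\sigma(t)-s}$, $y^{\Delta\Delta}=(y^\Delta)^\Delta$; $\mathbb{T}^{\kappa^2}$ denotes $\mathbb{T}$ with up to two left-scattered maximal points removed (iterating $\mathbb{T}^\kappa$). For a right-dense continuous $\ell$ with $1+\mu\ell\neq0$, $e_\ell(\cdot,t_0)$ is the unique solution of $\phi^\Delta=\ell\phi$, $\phi(t_0)=1$. *)

theory Defs
  imports "HOL-Analysis.Analysis"
begin

text \<open>Basic time-scale notions, relative to a set S of reals (a time scale or a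
restriction I \<inter> T of one). Conventions: inf of the empty set is sup S, sup of the
empty set is inf S, i.e. sigma(max S) = max S and rho(min S) = min S.\<close>

definition ts_sigma :: "real set \<Rightarrow> real \<Rightarrow> real" where
  "ts_sigma S t = (if \<exists>s\<in>S. s > t then Inf {s\<in>S. s > t} else t)"

definition ts_rho :: "real set \<Rightarrow> real \<Rightarrow> real" where
  "ts_rho S t = (if \<exists>s\<in>S. s < t then Sup {s\<in>S. s < t} else t)"

definition ts_mu :: "real set \<Rightarrow> real \<Rightarrow> real" where
  "ts_mu S t = ts_sigma S t - t"

definition right_dense :: "real set \<Rightarrow> real \<Rightarrow> bool" where
  "right_dense S t \<longleftrightarrow> (\<exists>s\<in>S. s > t) \<and> ts_sigma S t = t"

definition left_dense :: "real set \<Rightarrow> real \<Rightarrow> bool" where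
  "left_dense S t \<longleftrightarrow> (\<exists>s\<in>S. s < t) \<and> ts_rho S t = t"

definition left_scattered :: "real set \<Rightarrow> real \<Rightarrow> bool" where
  "left_scattered S t \<longleftrightarrow> ts_rho S t < t"

definition ts_kappa :: "real set \<Rightarrow> real set" where
  "ts_kappa S = (if \<exists>m\<in>S. (\<forall>s\<in>S. s \<le> m) \<and> left_scattered S m
                 then S - {m. m \<in> S \<and> (\<forall>s\<in>S. s \<le> m) \<and> left_scattered S m} else S)"

definition has_delta_derivative :: "real set \<Rightarrow> (real \<Rightarrow> real) \<Rightarrow> real \<Rightarrow> real \<Rightarrow> bool" where
  "has_delta_derivative S f D t \<longleftrightarrow>
     (\<forall>\<epsilon>>0. \<exists>\<delta>>0. \<forall>s\<in>S. \<bar>s - t\<bar> < \<delta> \<longrightarrow>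
        \<bar>f (ts_sigma S t) - f s - D * (ts_sigma S t - s)\<bar> \<le> \<epsilon> * \<bar>ts_sigma S t - s\<bar>)"

definition rd_continuous_on :: "real set \<Rightarrow> (real \<Rightarrow> real) \<Rightarrow> bool" where
  "rd_continuous_on S f \<longleftrightarrow>
     (\<forall>t\<in>S. (right_dense S t \<longrightarrow> continuous (at t within S) f) \<and>
            (left_dense S t \<longrightarrow> (\<exists>L. (f \<longlongrightarrow> L) (at t within {s\<in>S. s < t}))))"

definition time_scale :: "real set \<Rightarrow> bool" where
  "time_scale T \<longleftrightarrow> T \<noteq> {} \<and> closed T"

definition ts_exp :: "real set \<Rightarrow> (real \<Rightarrow> real) \<Rightarrow> real \<Rightarrow> real \<Rightarrow> real" where
  "ts_exp T l t0 = (THE \<phi>. \<phi> t0 = 1 \<and>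
      (\<forall>t\<in>ts_kappa T. has_delta_derivative T \<phi> (l t * \<phi> t) t) \<and>
      (\<forall>t. t \<notin> T \<longrightarrow> \<phi> t = 0))"

end

theory Submission
  imports Defs
begin


lemma fwd_mono:
  fixes K :: "real set" and u :: "real \<Rightarrow> real" and a b :: real
  assumes K: "closed K" and aK: "a \<in> K" and bK: "b \<in> K" and Ka: "K \<subseteq> {a..}"
    and scat: "\<And>t s. t \<in> K \<Longrightarrow> s \<in> K \<Longrightarrow> t < s \<Longrightarrow> (\<forall>r\<in>K. t < r \<longrightarrow> s \<le> r) \<Longrightarrow> u s \<le> u t"
    and dense: "\<And>t \<epsilon>. t \<in> K \<Longrightarrow> t \<in> closure (K \<inter> {t<..}) \<Longrightarrow> \<epsilon> > 0 \<Longrightarrow>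
        \<exists>\<delta>>0. \<forall>s\<in>K. t < s \<and> s < t + \<delta> \<longrightarrow> u s \<le> u t + \<epsilon> * (s - t)"
    and cont: "\<And>t. t \<in> K \<Longrightarrow> a < t \<Longrightarrow> t \<in> closure (K \<inter> {..<t}) \<Longrightarrow> (u \<longlongrightarrow> u t) (at t within K \<inter> {..<t})"
  shows "u b \<le> u a"
proof -
  have main: "\<forall>t\<in>K. u t \<le> u a + \<epsilon> * (t - a)" if ep: "\<epsilon> > 0" for \<epsilon>
  proof (rule ccontr)
    assume nc: "\<not> ?thesis"
    define B where "B = {t\<in>K. \<not> (u t \<le> u a + \<epsilon> * (t - a))}"
    have Bne: "B \<noteq> {}" using nc B_def by auto
    have Bbdd: "bdd_below B" using Ka B_def by (auto intro!: bdd_belowI[of _ a])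
    define c where "c = Inf B"
    have "c \<in> closure B" unfolding c_def by (rule closure_contains_Inf[OF Bne Bbdd])
    moreover have "closure B \<subseteq> K" using K B_def by (intro closure_minimal) auto
    ultimately have cK: "c \<in> K" by auto
    hence ca: "c \<ge> a" using Ka by auto
    have below: "u r \<le> u a + \<epsilon> * (r - a)" if "r \<in> K" "r < c" for r
    proof (rule ccontr)
      assume "\<not> ?thesis" hence "r \<in> B" using that B_def by auto
      hence "c \<le> r" unfolding c_def using Bbdd by (rule cInf_lower)
      thus False using that by auto
    qed
    have Pc: "u c \<le> u a + \<epsilon> * (c - a)"
    proof (cases "c = a")
      case True thus ?thesis by simp
    next
      case False hence ac: "a < c" using ca by auto
      show ?thesis
      proof (cases "c \<in> closure (K \<inter> {..<c})")
        case True
        have lim: "(u \<longlongrightarrow> u c) (at c within K \<inter> {..<c})" using cont[OF cK ac True] .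
        have nb: "at c within K \<inter> {..<c} \<noteq> bot"
        proof -
          have "K \<inter> {..<c} - {c} = K \<inter> {..<c}" by auto
          hence "c islimpt (K \<inter> {..<c})" using True by (simp add: islimpt_in_closure)
          thus ?thesis using trivial_limit_within by blast
        qed
        have lim2: "((\<lambda>r. u a + \<epsilon> * (r - a)) \<longlongrightarrow> u a + \<epsilon> * (c - a)) (at c within K \<inter> {..<c})"
          by (intro tendsto_intros)
        have ev: "eventually (\<lambda>r. u r \<le> u a + \<epsilon> * (r - a)) (at c within K \<inter> {..<c})"
          unfolding eventually_at using below by (auto intro!: exI[of _ 1])
        show ?thesis using tendsto_le[OF nb lim2 lim ev] .
      next
        case False
        define A where "A = K \<inter> {..<c}"
        have Ane: "A \<noteq> {}" using aK ac A_def by auto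
        have Abdd: "bdd_above A" unfolding A_def by (auto intro!: bdd_aboveI[of _ c])
        define m where "m = Sup A"
        have mA: "m \<in> closure A" unfolding m_def by (rule closure_contains_Sup[OF Ane Abdd])
        have "closure A \<subseteq> K" using K A_def by (intro closure_minimal) auto
        hence mK: "m \<in> K" using mA by auto
        have "m \<le> c" unfolding m_def using Ane by (intro cSup_least) (auto simp: A_def)
        moreover have "m \<noteq> c" using mA False A_def by auto
        ultimately have mc: "m < c" by auto
        have ma: "a \<le> m" unfolding m_def using aK ac Abdd by (intro cSup_upper) (auto simp: A_def)
        have succ: "\<forall>r\<in>K. m < r \<longrightarrow> c \<le> r"
        proof (intro ballI impI)
          fix r assume r: "r \<in> K" "m < r"
          show "c \<le> r"
          proof (rule ccontr)
            assume "\<not> c \<le> r" hence "r \<in> A" using r A_def by auto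
            hence "r \<le> m" unfolding m_def using Abdd by (rule cSup_upper)
            thus False using r by auto
          qed
        qed
        have "u c \<le> u m" using scat[OF mK cK mc succ] .
        also have "\<dots> \<le> u a + \<epsilon> * (m - a)" using below[OF mK mc] .
        also have "\<dots> \<le> u a + \<epsilon> * (c - a)" using mc ep by simp
        finally show ?thesis .
      qed
    qed
    obtain \<delta> where dpos: "\<delta> > 0" and dP: "\<forall>s\<in>K. c < s \<and> s < c + \<delta> \<longrightarrow> u s \<le> u a + \<epsilon> * (s - a)"
    proof (cases "c \<in> closure (K \<inter> {c<..})")
      case True
      obtain \<delta> where d: "\<delta> > 0" "\<forall>s\<in>K. c < s \<and> s < c + \<delta> \<longrightarrow> u s \<le> u c + \<epsilon> * (s - c)"
        using dense[OF cK True ep] by blast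
      show ?thesis
      proof (rule that[OF d(1)], intro ballI impI)
        fix s assume "s \<in> K" "c < s \<and> s < c + \<delta>"
        hence "u s \<le> u c + \<epsilon> * (s - c)" using d by auto
        thus "u s \<le> u a + \<epsilon> * (s - a)" using Pc by (simp add: algebra_simps)
      qed
    next
      case False
      then obtain e where e: "e > 0" "\<forall>y\<in>K \<inter> {c<..}. \<not> dist y c < e"
        unfolding closure_approachable by auto
      show ?thesis
      proof (rule that[OF e(1)], intro ballI impI)
        fix s assume "s \<in> K" "c < s \<and> s < c + e"
        hence "s \<in> K \<inter> {c<..}" "\<bar>s - c\<bar> < e" by auto
        hence False using e(2) by (auto simp: dist_real_def)
        thus "u s \<le> u a + \<epsilon> * (s - a)" ..
      qed
    qed
    have "c + \<delta> \<le> c" unfolding c_def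
    proof (rule cInf_greatest[OF Bne])
      fix x assume xB: "x \<in> B"
      hence "Inf B \<le> x" using Bbdd by (intro cInf_lower)
      hence cx: "c \<le> x" using c_def by simp
      have "x \<noteq> c" using xB Pc B_def by auto
      hence "c < x" using cx by auto
      moreover have "\<not> (u x \<le> u a + \<epsilon> * (x - a))" "x \<in> K" using xB B_def by auto
      ultimately show "Inf B + \<delta> \<le> x" using dP c_def by force
    qed
    thus False using dpos by simp
  qed
  have ab: "a \<le> b" using Ka bK by auto
  show ?thesis
  proof (rule ccontr)
    assume "\<not> ?thesis"
    hence lt: "u a < u b" by simp
    hence "a \<noteq> b" by auto
    hence ab': "a < b" using ab by auto
    define \<epsilon> where "\<epsilon> = (u b - u a) / (2 * (b - a))"
    have ep: "\<epsilon> > 0" using lt ab' \<epsilon>_def by simp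
    have "u b \<le> u a + \<epsilon> * (b - a)" using main[OF ep] bK by auto
    also have "\<epsilon> * (b - a) = (u b - u a) / 2" using ab' \<epsilon>_def by (simp add: field_simps)
    finally have "u b \<le> u a + (u b - u a) / 2" .
    thus False using lt by (simp add: field_simps)
  qed
qed



lemma sigma_ge: "ts_sigma S t \<ge> t"
  unfolding ts_sigma_def by (auto intro!: cInf_greatest)

lemma sigma_le: "s \<in> S \<Longrightarrow> t < s \<Longrightarrow> ts_sigma S t \<le> s"
  unfolding ts_sigma_def by (auto intro!: cInf_lower bdd_belowI[of _ t])

lemma sigma_succ: "s \<in> S \<Longrightarrow> t < s \<Longrightarrow> (\<forall>r\<in>S. t < r \<longrightarrow> s \<le> r) \<Longrightarrow> ts_sigma S t = s"
  unfolding ts_sigma_def by (auto intro!: cInf_eq_minimum)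

lemma sigma_dense:
  assumes "\<forall>\<delta>>0. \<exists>r\<in>S. t < r \<and> r < t + \<delta>"
  shows "ts_sigma S t = t"
proof -
  obtain r0 where r0: "r0 \<in> S" "t < r0" using assms by (metis zero_less_one)
  have "ts_sigma S t \<le> t"
  proof (rule ccontr)
    assume "\<not> ?thesis"
    hence "ts_sigma S t - t > 0" by simp
    hence "\<exists>r\<in>S. t < r \<and> r < t + (ts_sigma S t - t)" using assms by blast
    then obtain r where r: "r \<in> S" "t < r" "r < ts_sigma S t" by auto
    thus False using sigma_le[OF r(1,2)] by simp
  qed
  thus ?thesis using sigma_ge[of t S] by simp
qed

lemma sigma_in:
  assumes "closed S" "ts_sigma S t > t"
  shows "ts_sigma S t \<in> S"
proof -
  have ex: "\<exists>s\<in>S. s > t" using assms(2) unfolding ts_sigma_def by (auto split: if_splits)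
  define A where "A = {s\<in>S. s > t}"
  have "A \<noteq> {}" "bdd_below A" using ex A_def by (auto intro!: bdd_belowI[of _ t])
  hence "Inf A \<in> closure A" by (rule closure_contains_Inf)
  moreover have "closure A \<subseteq> S" using assms(1) A_def by (intro closure_minimal) auto
  ultimately show ?thesis using ex unfolding ts_sigma_def A_def by auto
qed

lemma kappa_sub: "ts_kappa A \<subseteq> A"
  unfolding ts_kappa_def by auto

lemma kappa_notmax: assumes "r \<in> A" "s \<in> A" "r < s" shows "r \<in> ts_kappa A"
proof -
  have "\<not> (\<forall>x\<in>A. x \<le> r)" using assms by force
  thus ?thesis unfolding ts_kappa_def using assms(1) by auto
qed

lemma kappa_leftlim:
  assumes tA: "t \<in> A" and BA: "B \<subseteq> A" and cl: "t \<in> closure (B \<inter> {..<t})"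
  shows "t \<in> ts_kappa A"
proof -
  have "\<exists>y\<in>B \<inter> {..<t}. dist y t < 1" using cl unfolding closure_approachable by auto
  hence ex: "\<exists>s\<in>A. s < t" using BA by auto
  define C where "C = {s\<in>A. s < t}"
  have Cne: "C \<noteq> {}" using ex C_def by auto
  have Cb: "bdd_above C" using C_def by (auto intro!: bdd_aboveI[of _ t])
  have "Sup C \<le> t" using Cne by (intro cSup_least) (auto simp: C_def)
  moreover have "Sup C \<ge> t"
  proof (rule ccontr)
    assume "\<not> ?thesis"
    hence "t - Sup C > 0" by simp
    then obtain y where y: "y \<in> B" "y < t" "dist y t < t - Sup C" using cl unfolding closure_approachable by blast
    have "y \<in> C" using y BA C_def by auto
    hence "y \<le> Sup C" using Cb by (rule cSup_upper)
    thus False using y by (auto simp: dist_real_def)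
  qed
  ultimately have "ts_rho A t = t" unfolding ts_rho_def C_def using ex by auto
  hence "\<not> left_scattered A t" unfolding left_scattered_def by simp
  thus ?thesis using tA unfolding ts_kappa_def by auto
qed

lemma zero_by_eps:
  fixes x c :: real
  assumes "c \<ge> 0" "\<And>\<epsilon>. \<epsilon> > 0 \<Longrightarrow> \<bar>x\<bar> \<le> \<epsilon> * c"
  shows "x = 0"
proof (rule ccontr)
  assume "x \<noteq> 0"
  hence xp: "\<bar>x\<bar> > 0" by simp
  define \<epsilon> where "\<epsilon> = \<bar>x\<bar> / (2 * (c + 1))"
  have "\<epsilon> > 0" using xp assms(1) \<epsilon>_def by simp
  hence "\<bar>x\<bar> \<le> \<epsilon> * c" by (rule assms(2))
  also have "\<epsilon> * c < \<bar>x\<bar>"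
  proof -
    have "0 < c * \<bar>x\<bar> + \<bar>x\<bar> * 2" using xp assms(1) by (simp add: add_nonneg_pos)
    thus ?thesis using xp assms(1) unfolding \<epsilon>_def by (simp add: field_simps)
  qed
  finally show False by simp
qed

lemma D1:
  assumes "has_delta_derivative S f D t" "t \<in> S"
  shows "f (ts_sigma S t) = f t + D * (ts_sigma S t - t)"
proof -
  have "f (ts_sigma S t) - f t - D * (ts_sigma S t - t) = 0"
  proof (rule zero_by_eps[of "\<bar>ts_sigma S t - t\<bar>"])
    fix \<epsilon> :: real assume "\<epsilon> > 0"
    then obtain \<delta> where "\<delta> > 0" "\<forall>s\<in>S. \<bar>s - t\<bar> < \<delta> \<longrightarrow>
        \<bar>f (ts_sigma S t) - f s - D * (ts_sigma S t - s)\<bar> \<le> \<epsilon> * \<bar>ts_sigma S t - s\<bar>"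
      using assms(1) unfolding has_delta_derivative_def by blast
    thus "\<bar>f (ts_sigma S t) - f t - D * (ts_sigma S t - t)\<bar> \<le> \<epsilon> * \<bar>ts_sigma S t - t\<bar>"
      using assms(2) by auto
  qed simp
  thus ?thesis by simp
qed

lemma D2:
  assumes "has_delta_derivative S f D t" "ts_sigma S t = t" "\<epsilon> > 0"
  shows "\<exists>\<delta>>0. \<forall>s\<in>S. \<bar>s - t\<bar> < \<delta> \<longrightarrow> \<bar>f s - f t - D * (s - t)\<bar> \<le> \<epsilon> * \<bar>s - t\<bar>"
proof -
  obtain \<delta> where d: "\<delta> > 0" "\<forall>s\<in>S. \<bar>s - t\<bar> < \<delta> \<longrightarrow>
        \<bar>f (ts_sigma S t) - f s - D * (ts_sigma S t - s)\<bar> \<le> \<epsilon> * \<bar>ts_sigma S t - s\<bar>"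
    using assms(1,3) unfolding has_delta_derivative_def by blast
  have "\<forall>s\<in>S. \<bar>s - t\<bar> < \<delta> \<longrightarrow> \<bar>f s - f t - D * (s - t)\<bar> \<le> \<epsilon> * \<bar>s - t\<bar>"
  proof (intro ballI impI)
    fix s assume "s \<in> S" "\<bar>s - t\<bar> < \<delta>"
    hence "\<bar>f t - f s - D * (t - s)\<bar> \<le> \<epsilon> * \<bar>t - s\<bar>" using d(2) assms(2) by auto
    moreover have "\<bar>f t - f s - D * (t - s)\<bar> = \<bar>f s - f t - D * (s - t)\<bar>" by (simp add: abs_minus_commute algebra_simps)
    moreover have "\<bar>t - s\<bar> = \<bar>s - t\<bar>" by simp
    ultimately show "\<bar>f s - f t - D * (s - t)\<bar> \<le> \<epsilon> * \<bar>s - t\<bar>" by simp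
  qed
  thus ?thesis using d(1) by blast
qed

lemma D3:
  assumes der: "has_delta_derivative S f D t" and tS: "t \<in> S"
  shows "(f \<longlongrightarrow> f t) (at t within S)"
proof (rule tendstoI)
  fix e :: real assume e: "e > 0"
  define \<mu> where "\<mu> = ts_sigma S t - t"
  have mu0: "\<mu> \<ge> 0" using sigma_ge[of t S] \<mu>_def by simp
  define \<eta> where "\<eta> = e / (4 * (\<mu> + 1))"
  have eta: "\<eta> > 0" using e mu0 \<eta>_def by simp
  obtain \<delta> where d: "\<delta> > 0" "\<forall>s\<in>S. \<bar>s - t\<bar> < \<delta> \<longrightarrow>
        \<bar>f (ts_sigma S t) - f s - D * (ts_sigma S t - s)\<bar> \<le> \<eta> * \<bar>ts_sigma S t - s\<bar>"
    using der eta unfolding has_delta_derivative_def by blast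
  have fs: "f (ts_sigma S t) = f t + D * \<mu>" using D1[OF der tS] \<mu>_def by simp
  define \<delta>' where "\<delta>' = min \<delta> (min 1 (e / (4 * (\<bar>D\<bar> + 1))))"
  have d': "\<delta>' > 0" using d(1) e \<delta>'_def by simp
  show "eventually (\<lambda>s. dist (f s) (f t) < e) (at t within S)"
    unfolding eventually_at
  proof (rule exI[of _ \<delta>'], intro conjI d' ballI impI)
    fix s assume s: "s \<in> S" "s \<noteq> t \<and> dist s t < \<delta>'"
    have st: "\<bar>s - t\<bar> < \<delta>'" using s by (simp add: dist_real_def)
    hence "\<bar>f (ts_sigma S t) - f s - D * (ts_sigma S t - s)\<bar> \<le> \<eta> * \<bar>ts_sigma S t - s\<bar>"
      using d(2) s(1) \<delta>'_def by auto
    hence A: "\<bar>f t - f s - D * (t - s)\<bar> \<le> \<eta> * \<bar>\<mu> + (t - s)\<bar>"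
      using fs \<mu>_def by (simp add: algebra_simps)
    have "\<bar>\<mu> + (t - s)\<bar> \<le> \<mu> + 1" using st mu0 \<delta>'_def by linarith
    hence "\<eta> * \<bar>\<mu> + (t - s)\<bar> \<le> \<eta> * (\<mu> + 1)" using eta by (intro mult_left_mono) auto
    also have "\<dots> = e / 4" using mu0 \<eta>_def by (simp add: field_simps)
    finally have A': "\<bar>f t - f s - D * (t - s)\<bar> \<le> e / 4" using A by linarith
    have "\<bar>t - s\<bar> \<le> e / (4 * (\<bar>D\<bar> + 1))" using st \<delta>'_def by linarith
    hence "\<bar>D * (t - s)\<bar> \<le> \<bar>D\<bar> * (e / (4 * (\<bar>D\<bar> + 1)))"
      by (simp only: abs_mult) (intro mult_left_mono, auto)
    also have "\<dots> \<le> e / 4" using e by (simp add: field_simps)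
    finally have "\<bar>D * (t - s)\<bar> \<le> e / 4" .
    hence "\<bar>f s - f t\<bar> \<le> e / 2" using A' by linarith
    thus "dist (f s) (f t) < e" using e by (simp add: dist_real_def)
  qed
qed



definition RSet :: "real set \<Rightarrow> real set" where "RSet T = {r\<in>T. ts_sigma T r > r}"
definition hf :: "real \<Rightarrow> real \<Rightarrow> real" where "hf k m = k * m - ln (1 + k * m)"
definition Gs :: "real set \<Rightarrow> real \<Rightarrow> real \<Rightarrow> real \<Rightarrow> real" where
  "Gs T k a b = infsum (\<lambda>r. hf k (ts_sigma T r - r)) (RSet T \<inter> {a..<b})"

lemma hf_nonneg: "k \<ge> 0 \<Longrightarrow> m \<ge> 0 \<Longrightarrow> 0 \<le> hf k m"
  unfolding hf_def using ln_add_one_self_le_self[of "k*m"] by simp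

lemma hf_le:
  assumes "k \<ge> 0" "m \<ge> 0" shows "hf k m \<le> (k * m)^2"
proof -
  have x0: "k * m \<ge> 0" using assms by simp
  show ?thesis
  proof (cases "k * m \<le> 1")
    case True
    thus ?thesis using ln_one_plus_pos_lower_bound[OF x0 True] unfolding hf_def by simp
  next
    case False
    hence "k * m * 1 \<le> k * m * (k * m)" using x0 by (intro mult_left_mono) auto
    hence "k * m \<le> (k * m)^2" by (simp add: power2_eq_square)
    moreover have "0 \<le> ln (1 + k * m)" using x0 by simp
    ultimately show ?thesis unfolding hf_def by simp
  qed
qed

lemma musum:
  assumes T: "closed T"
  shows "finite F \<Longrightarrow> b \<in> T \<Longrightarrow> a \<le> b \<Longrightarrow> F \<subseteq> RSet T \<inter> {a..<b} \<Longrightarrow>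
    (\<Sum>r\<in>F. ts_sigma T r - r) \<le> b - a"
proof (induction "card F" arbitrary: F b rule: less_induct)
  case less
  show ?case
  proof (cases "F = {}")
    case True thus ?thesis using less.prems by simp
  next
    case False
    define m where "m = Max F"
    have mF: "m \<in> F" using False less.prems m_def by simp
    have mT: "m \<in> T" "a \<le> m" "m < b" using mF less.prems unfolding RSet_def by auto
    have sub: "F - {m} \<subseteq> RSet T \<inter> {a..<m}"
    proof
      fix r assume r: "r \<in> F - {m}"
      hence "r \<le> m" using less.prems m_def by simp
      thus "r \<in> RSet T \<inter> {a..<m}" using r less.prems by auto
    qed
    have "card F > 0" using mF less.prems card_gt_0_iff by blast
    hence card: "card (F - {m}) < card F" using mF less.prems by simp
    have IH: "(\<Sum>r\<in>F - {m}. ts_sigma T r - r) \<le> m - a"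
      using less.hyps[OF card _ mT(1) mT(2) sub] less.prems by simp
    have "ts_sigma T m \<le> b" using sigma_le[of b T m] less.prems mT by simp
    hence "ts_sigma T m - m \<le> b - m" by simp
    moreover have "(\<Sum>r\<in>F. ts_sigma T r - r) = (ts_sigma T m - m) + (\<Sum>r\<in>F - {m}. ts_sigma T r - r)"
      using mF less.prems by (simp add: sum.remove)
    ultimately show ?thesis using IH by simp
  qed
qed

lemma Gfin:
  assumes T: "closed T" and k: "k \<ge> 0" and b: "b \<in> T" "a \<le> b"
    and F: "finite F" "F \<subseteq> RSet T \<inter> {a..<b}"
  shows "(\<Sum>r\<in>F. hf k (ts_sigma T r - r)) \<le> k^2 * (b - a)^2"
proof -
  have "(\<Sum>r\<in>F. hf k (ts_sigma T r - r)) \<le> (\<Sum>r\<in>F. k^2 * (b - a) * (ts_sigma T r - r))"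
  proof (rule sum_mono)
    fix r assume r: "r \<in> F"
    have m0: "ts_sigma T r - r \<ge> 0" using sigma_ge[of r T] by simp
    have rr: "r \<in> T" "a \<le> r" "r < b" using r F unfolding RSet_def by auto
    have "ts_sigma T r \<le> b" using sigma_le[of b T r] b rr by simp
    hence mb: "ts_sigma T r - r \<le> b - a" using rr by simp
    have "hf k (ts_sigma T r - r) \<le> (k * (ts_sigma T r - r))^2" by (rule hf_le[OF k m0])
    also have "\<dots> = k^2 * (ts_sigma T r - r) * (ts_sigma T r - r)" by (simp add: power2_eq_square)
    also have "\<dots> \<le> k^2 * (b - a) * (ts_sigma T r - r)"
      using mb m0 by (intro mult_right_mono mult_left_mono) auto
    finally show "hf k (ts_sigma T r - r) \<le> k^2 * (b - a) * (ts_sigma T r - r)" .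
  qed
  also have "\<dots> = k^2 * (b - a) * (\<Sum>r\<in>F. ts_sigma T r - r)" by (simp add: sum_distrib_left)
  also have "\<dots> \<le> k^2 * (b - a) * (b - a)"
    using musum[OF T F(1) b F(2)] b by (intro mult_left_mono) auto
  finally show ?thesis by (simp add: power2_eq_square)
qed

lemma Gsumm:
  assumes T: "closed T" and k: "k \<ge> 0" and b: "b \<in> T" "a \<le> b"
  shows "(\<lambda>r. hf k (ts_sigma T r - r)) summable_on (RSet T \<inter> {a..<b})"
proof (rule nonneg_bdd_above_summable_on)
  show "\<And>x. x \<in> RSet T \<inter> {a..<b} \<Longrightarrow> 0 \<le> hf k (ts_sigma T x - x)"
    using k sigma_ge by (intro hf_nonneg) auto
  show "bdd_above (sum (\<lambda>r. hf k (ts_sigma T r - r)) ` {F. F \<subseteq> RSet T \<inter> {a..<b} \<and> finite F})"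
    using Gfin[OF T k b] by (intro bdd_aboveI[of _ "k^2 * (b - a)^2"]) auto
qed

lemma Gbnd:
  assumes T: "closed T" and k: "k \<ge> 0" and b: "b \<in> T" "a \<le> b"
  shows "0 \<le> Gs T k a b" "Gs T k a b \<le> k^2 * (b - a)^2"
proof -
  show "0 \<le> Gs T k a b" unfolding Gs_def
    using k sigma_ge by (intro infsum_nonneg hf_nonneg) auto
  show "Gs T k a b \<le> k^2 * (b - a)^2" unfolding Gs_def
    using Gfin[OF T k b] by (intro infsum_le_finite_sums Gsumm[OF T k b]) auto
qed

lemma Gadd:
  assumes T: "closed T" and k: "k \<ge> 0" and "b \<in> T" "c \<in> T" "a \<le> b" "b \<le> c"
  shows "Gs T k a c = Gs T k a b + Gs T k b c"
proof -
  have "RSet T \<inter> {a..<c} = (RSet T \<inter> {a..<b}) \<union> (RSet T \<inter> {b..<c})" using assms by auto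
  moreover have "(RSet T \<inter> {a..<b}) \<inter> (RSet T \<inter> {b..<c}) = {}" by auto
  ultimately show ?thesis unfolding Gs_def
    using assms by (simp add: infsum_Un_disjoint Gsumm)
qed

lemma Gstep:
  assumes T: "closed T" and r: "r \<in> T" "ts_sigma T r > r"
  shows "Gs T k r (ts_sigma T r) = hf k (ts_sigma T r - r)"
proof -
  have "RSet T \<inter> {r..<ts_sigma T r} = {r}"
  proof
    show "{r} \<subseteq> RSet T \<inter> {r..<ts_sigma T r}" using r unfolding RSet_def by auto
    show "RSet T \<inter> {r..<ts_sigma T r} \<subseteq> {r}"
    proof
      fix x assume x: "x \<in> RSet T \<inter> {r..<ts_sigma T r}"
      have "x \<le> r"
      proof (rule ccontr)
        assume "\<not> x \<le> r"
        hence "ts_sigma T r \<le> x" using x unfolding RSet_def by (intro sigma_le) auto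
        thus False using x by auto
      qed
      thus "x \<in> {r}" using x by auto
    qed
  qed
  thus ?thesis unfolding Gs_def by simp
qed

definition Hs :: "real set \<Rightarrow> real \<Rightarrow> real \<Rightarrow> real \<Rightarrow> real" where
  "Hs T k t0 t = (if t0 \<le> t then Gs T k t0 t else - Gs T k t t0)"

definition phi :: "real set \<Rightarrow> real \<Rightarrow> real \<Rightarrow> real \<Rightarrow> real" where
  "phi T k t0 t = (if t \<in> T then exp (k * (t - t0) - Hs T k t0 t) else 0)"

lemma Hdiff:
  assumes T: "closed T" and k: "k \<ge> 0" and t0: "t0 \<in> T" and ab: "a \<in> T" "b \<in> T" "a \<le> b"
  shows "Hs T k t0 b - Hs T k t0 a = Gs T k a b"
proof -
  consider "t0 \<le> a" | "a < t0" "t0 \<le> b" | "b < t0" by linarith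
  thus ?thesis
  proof cases
    case 1 thus ?thesis using Gadd[OF T k ab(1,2) 1 ab(3)] ab unfolding Hs_def by simp
  next
    case 2
    have "Gs T k a b = Gs T k a t0 + Gs T k t0 b" using 2 by (intro Gadd[OF T k t0 ab(2)]) auto
    thus ?thesis using 2 unfolding Hs_def by simp
  next
    case 3
    have "Gs T k a t0 = Gs T k a b + Gs T k b t0" using 3 ab by (intro Gadd[OF T k ab(2) t0]) auto
    thus ?thesis using 3 ab unfolding Hs_def by simp
  qed
qed

lemma Hloc:
  assumes T: "closed T" and k: "k \<ge> 0" and t0: "t0 \<in> T" and ab: "s \<in> T" "t \<in> T"
  shows "\<bar>Hs T k t0 s - Hs T k t0 t\<bar> \<le> k^2 * (s - t)^2"
proof (cases "t \<le> s")
  case True thus ?thesis using Hdiff[OF T k t0 ab(2,1) True] Gbnd[OF T k ab(1) True] by simp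
next
  case False
  hence "s \<le> t" by simp
  thus ?thesis using Hdiff[OF T k t0 ab(1,2)] Gbnd[OF T k ab(2), of s]
    by (simp add: power2_commute)
qed

lemma phi_pos: "t \<in> T \<Longrightarrow> phi T k t0 t > 0"
  unfolding phi_def by simp

lemma phi_t0: "t0 \<in> T \<Longrightarrow> phi T k t0 t0 = 1"
  unfolding phi_def Hs_def Gs_def by simp

lemma exp_taylor1:
  fixes x :: real assumes "\<bar>x\<bar> \<le> 1" shows "\<bar>exp x - 1 - x\<bar> \<le> 3 * x^2"
proof -
  have "norm (exp x - (\<Sum>i\<le>1. x ^ i / fact i)) \<le> exp (norm x) * (norm x ^ Suc 1) / fact 1"
    by (rule Taylor_exp_field)
  hence "\<bar>exp x - 1 - x\<bar> \<le> exp \<bar>x\<bar> * x^2" by (simp add: power2_eq_square algebra_simps)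
  also have "exp \<bar>x\<bar> \<le> 3" using exp_le assms by (meson exp_le_cancel_iff order_trans)
  hence "exp \<bar>x\<bar> * x^2 \<le> 3 * x^2" by (intro mult_right_mono) auto
  finally show ?thesis .
qed



lemma phi_loc:
  assumes T: "closed T" and k: "k \<ge> 0" and t0: "t0 \<in> T" and t: "t \<in> T" and ep: "\<epsilon> > 0"
  shows "\<exists>\<delta>>0. \<forall>s\<in>T. \<bar>s - t\<bar> < \<delta> \<longrightarrow>
     \<bar>phi T k t0 s - phi T k t0 t - k * phi T k t0 t * (s - t)\<bar> \<le> \<epsilon> * \<bar>s - t\<bar>"
proof -
  define P where "P = phi T k t0 t"
  have P0: "P > 0" using phi_pos[OF t] P_def by simp
  define L where "L = k + k^2"
  have L0: "L \<ge> 0" using k L_def by simp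
  define M where "M = P * (3 * L^2 + k^2)"
  have M0: "M \<ge> 0" using P0 M_def by simp
  define \<delta> where "\<delta> = min 1 (min (1 / (L + 1)) (\<epsilon> / (M + 1)))"
  have d0: "\<delta> > 0" using L0 M0 ep \<delta>_def by simp
  have "\<forall>s\<in>T. \<bar>s - t\<bar> < \<delta> \<longrightarrow>
     \<bar>phi T k t0 s - phi T k t0 t - k * phi T k t0 t * (s - t)\<bar> \<le> \<epsilon> * \<bar>s - t\<bar>"
  proof (intro ballI impI)
    fix s assume s: "s \<in> T" "\<bar>s - t\<bar> < \<delta>"
    define d where "d = \<bar>s - t\<bar>"
    have d0': "d \<ge> 0" and d1: "d \<le> 1" and dL: "d \<le> 1 / (L + 1)" and dM: "d \<le> \<epsilon> / (M + 1)"
      using s(2) \<delta>_def d_def by auto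
    define h where "h = Hs T k t0 s - Hs T k t0 t"
    have hb: "\<bar>h\<bar> \<le> k^2 * d^2" using Hloc[OF T k t0 s(1) t] h_def d_def by (simp add: power2_abs)
    have "d^2 \<le> d" using d0' d1 by (simp add: power2_eq_square mult_left_le_one_le)
    hence hb1: "\<bar>h\<bar> \<le> k^2 * d" using hb by (meson k mult_left_mono order_trans zero_le_power2)
    define x where "x = k * (s - t) - h"
    have "\<bar>k * (s - t)\<bar> = k * d" using k d_def by (simp add: abs_mult)
    hence xb: "\<bar>x\<bar> \<le> L * d" using hb1 unfolding x_def L_def by (simp add: algebra_simps)
    have "L * d \<le> L / (L + 1)" using dL L0 by (metis mult_left_mono times_divide_eq_right mult_1_right)
    also have "\<dots> \<le> 1" using L0 by simp
    finally have x1: "\<bar>x\<bar> \<le> 1" using xb by linarith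
    have phis: "phi T k t0 s = P * exp x"
      unfolding P_def phi_def x_def h_def using s(1) t by (simp add: exp_add[symmetric] algebra_simps)
    have "x^2 \<le> (L * d)^2" using xb by (metis abs_ge_zero power2_abs power_mono)
    hence ex: "\<bar>exp x - 1 - x\<bar> \<le> 3 * (L^2 * d^2)" using exp_taylor1[OF x1] by (simp add: power_mult_distrib)
    have eq: "phi T k t0 s - phi T k t0 t - k * phi T k t0 t * (s - t) = P * (exp x - 1 - x) - P * h"
      unfolding phis P_def[symmetric] x_def by (simp add: algebra_simps)
    have "\<bar>P * (exp x - 1 - x) - P * h\<bar> \<le> P * \<bar>exp x - 1 - x\<bar> + P * \<bar>h\<bar>"
      using P0 abs_triangle_ineq4[of "P * (exp x - 1 - x)" "P * h"] by (simp add: abs_mult)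
    also have "\<dots> \<le> P * (3 * (L^2 * d^2)) + P * (k^2 * d^2)"
      using P0 ex hb by (intro add_mono mult_left_mono) auto
    also have "\<dots> = M * d * d" unfolding M_def by (simp add: power2_eq_square algebra_simps)
    also have "\<dots> \<le> \<epsilon> * d"
    proof -
      have "M * d \<le> M * (\<epsilon> / (M + 1))" using dM M0 by (intro mult_left_mono) auto
      also have "\<dots> \<le> \<epsilon>" using M0 ep by (simp add: field_simps)
      finally show ?thesis using d0' by (intro mult_right_mono) auto
    qed
    finally show "\<bar>phi T k t0 s - phi T k t0 t - k * phi T k t0 t * (s - t)\<bar> \<le> \<epsilon> * \<bar>s - t\<bar>"
      using eq d_def by simp
  qed
  thus ?thesis using d0 by blast
qed

lemma phi_scat:
  assumes T: "closed T" and k: "k \<ge> 0" and t0: "t0 \<in> T" and t: "t \<in> T" and sg: "ts_sigma T t > t"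
  shows "phi T k t0 (ts_sigma T t) = (1 + k * (ts_sigma T t - t)) * phi T k t0 t"
proof -
  define \<mu> where "\<mu> = ts_sigma T t - t"
  have sT: "ts_sigma T t \<in> T" using sigma_in[OF T sg] .
  have "Hs T k t0 (ts_sigma T t) - Hs T k t0 t = hf k \<mu>"
    using Hdiff[OF T k t0 t sT] sg Gstep[OF T t sg] \<mu>_def by simp
  hence "k * (ts_sigma T t - t0) - Hs T k t0 (ts_sigma T t) = (k * (t - t0) - Hs T k t0 t) + ln (1 + k * \<mu>)"
    unfolding hf_def \<mu>_def by (simp add: algebra_simps)
  moreover have "0 < 1 + k * \<mu>" using k sg \<mu>_def by (simp add: add_pos_nonneg)
  hence "exp (ln (1 + k * \<mu>)) = 1 + k * \<mu>" by simp
  ultimately show ?thesis unfolding phi_def using sT t \<mu>_def by (simp add: exp_add)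
qed

lemma phi_deriv:
  assumes T: "closed T" and k: "k \<ge> 0" and t0: "t0 \<in> T" and t: "t \<in> T"
  shows "has_delta_derivative T (phi T k t0) (k * phi T k t0 t) t"
  unfolding has_delta_derivative_def
proof (intro allI impI)
  fix \<epsilon> :: real assume ep: "\<epsilon> > 0"
  obtain \<delta> where d: "\<delta> > 0" "\<forall>s\<in>T. \<bar>s - t\<bar> < \<delta> \<longrightarrow>
     \<bar>phi T k t0 s - phi T k t0 t - k * phi T k t0 t * (s - t)\<bar> \<le> \<epsilon> * \<bar>s - t\<bar>"
    using phi_loc[OF T k t0 t ep] by blast
  show "\<exists>\<delta>>0. \<forall>s\<in>T. \<bar>s - t\<bar> < \<delta> \<longrightarrow>
          \<bar>phi T k t0 (ts_sigma T t) - phi T k t0 s - k * phi T k t0 t * (ts_sigma T t - s)\<bar>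
          \<le> \<epsilon> * \<bar>ts_sigma T t - s\<bar>"
  proof (cases "ts_sigma T t = t")
    case True
    have "\<forall>s\<in>T. \<bar>s - t\<bar> < \<delta> \<longrightarrow>
          \<bar>phi T k t0 (ts_sigma T t) - phi T k t0 s - k * phi T k t0 t * (ts_sigma T t - s)\<bar>
          \<le> \<epsilon> * \<bar>ts_sigma T t - s\<bar>"
    proof (intro ballI impI)
      fix s assume s: "s \<in> T" "\<bar>s - t\<bar> < \<delta>"
      have "\<bar>phi T k t0 t - phi T k t0 s - k * phi T k t0 t * (t - s)\<bar>
          = \<bar>phi T k t0 s - phi T k t0 t - k * phi T k t0 t * (s - t)\<bar>"
        by (simp add: abs_minus_commute algebra_simps)
      thus "\<bar>phi T k t0 (ts_sigma T t) - phi T k t0 s - k * phi T k t0 t * (ts_sigma T t - s)\<bar>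
          \<le> \<epsilon> * \<bar>ts_sigma T t - s\<bar>" using d(2) s True by (simp add: abs_minus_commute)
    qed
    thus ?thesis using d(1) by blast
  next
    case False
    hence sg: "ts_sigma T t > t" using sigma_ge[of t T] by simp
    define \<mu> where "\<mu> = ts_sigma T t - t"
    have mu: "\<mu> > 0" using sg \<mu>_def by simp
    have ps: "phi T k t0 (ts_sigma T t) = (1 + k * \<mu>) * phi T k t0 t"
      using phi_scat[OF T k t0 t sg] \<mu>_def by simp
    have "\<forall>s\<in>T. \<bar>s - t\<bar> < min \<delta> \<mu> \<longrightarrow>
          \<bar>phi T k t0 (ts_sigma T t) - phi T k t0 s - k * phi T k t0 t * (ts_sigma T t - s)\<bar>
          \<le> \<epsilon> * \<bar>ts_sigma T t - s\<bar>"
    proof (intro ballI impI)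
      fix s assume s: "s \<in> T" "\<bar>s - t\<bar> < min \<delta> \<mu>"
      have st: "s \<le> t"
      proof (rule ccontr)
        assume "\<not> s \<le> t"
        hence "ts_sigma T t \<le> s" using s(1) by (intro sigma_le) auto
        thus False using s(2) \<mu>_def by auto
      qed
      have "phi T k t0 (ts_sigma T t) - phi T k t0 s - k * phi T k t0 t * (ts_sigma T t - s)
          = - (phi T k t0 s - phi T k t0 t - k * phi T k t0 t * (s - t))"
        unfolding ps \<mu>_def by (simp add: algebra_simps)
      hence "\<bar>phi T k t0 (ts_sigma T t) - phi T k t0 s - k * phi T k t0 t * (ts_sigma T t - s)\<bar>
          = \<bar>phi T k t0 s - phi T k t0 t - k * phi T k t0 t * (s - t)\<bar>" by (simp only: abs_minus_cancel)
      also have "\<dots> \<le> \<epsilon> * \<bar>s - t\<bar>" using d(2) s by simp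
      also have "\<dots> \<le> \<epsilon> * \<bar>ts_sigma T t - s\<bar>" using st sg ep by (intro mult_left_mono) auto
      finally show "\<bar>phi T k t0 (ts_sigma T t) - phi T k t0 s - k * phi T k t0 t * (ts_sigma T t - s)\<bar>
          \<le> \<epsilon> * \<bar>ts_sigma T t - s\<bar>" .
    qed
    thus ?thesis using d(1) mu by (intro exI[of _ "min \<delta> \<mu>"]) auto
  qed
qed



lemma ratio_alg:
  fixes Nt Ns et es k d \<eta> \<epsilon> :: real
  assumes et: "et > 0" and k: "k \<ge> 0" and d: "0 < d" "d \<le> 1" and eta: "\<eta> > 0" "\<eta> \<le> et / 2"
    "\<eta> \<le> \<epsilon> * et^2 / (2 * (et + \<bar>Nt\<bar>))"
    and N: "Ns \<le> Nt * (1 + k * d) + \<eta> * d" and e: "\<bar>es - et * (1 + k * d)\<bar> \<le> \<eta> * d"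
  shows "Ns / es - Nt / et \<le> \<epsilon> * d"
proof -
  have kd: "k * d \<ge> 0" using k d by simp
  have "\<eta> * d \<le> \<eta>" using eta d by (simp add: mult_left_le_one_le)
  moreover have "es \<ge> et * (1 + k * d) - \<eta> * d" using e by linarith
  moreover have "et * (1 + k * d) \<ge> et" using et kd by (simp add: distrib_left)
  ultimately have "es \<ge> et / 2" using eta(2) by linarith
  hence es: "es > 0" "es \<ge> et / 2" using et by auto
  have A: "Ns * et \<le> (Nt * (1 + k * d) + \<eta> * d) * et" using N et by (intro mult_right_mono) auto
  have "- Nt * (es - et * (1 + k * d)) \<le> \<bar>Nt\<bar> * (\<eta> * d)"
  proof -
    have "- Nt * (es - et * (1 + k * d)) \<le> \<bar>- Nt * (es - et * (1 + k * d))\<bar>" by simp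
    also have "\<dots> = \<bar>Nt\<bar> * \<bar>es - et * (1 + k * d)\<bar>" by (simp add: abs_mult)
    also have "\<dots> \<le> \<bar>Nt\<bar> * (\<eta> * d)" using e by (intro mult_left_mono) auto
    finally show ?thesis .
  qed
  hence num: "Ns * et - Nt * es \<le> \<eta> * d * (et + \<bar>Nt\<bar>)" using A by (simp add: algebra_simps)
  have nn: "0 \<le> \<eta> * d * (et + \<bar>Nt\<bar>)" using eta d et by simp
  have "Ns / es - Nt / et = (Ns * et - Nt * es) / (es * et)" using es et by (simp add: field_simps)
  also have "\<dots> \<le> \<eta> * d * (et + \<bar>Nt\<bar>) / (es * et)" using num es et by (intro divide_right_mono) auto
  also have "\<dots> \<le> \<eta> * d * (et + \<bar>Nt\<bar>) / (et / 2 * et)"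
  proof (rule divide_left_mono)
    show "et / 2 * et \<le> es * et" using es et by (intro mult_right_mono) auto
    show "0 \<le> \<eta> * d * (et + \<bar>Nt\<bar>)" by (rule nn)
    show "0 < es * et * (et / 2 * et)" using es et by simp
  qed
  also have "\<dots> = d * (\<eta> * (2 * (et + \<bar>Nt\<bar>)) / et^2)" using et by (simp add: field_simps power2_eq_square)
  also have "\<dots> \<le> d * \<epsilon>"
  proof -
    have pos: "2 * (et + \<bar>Nt\<bar>) > 0" using et by simp
    have "\<eta> * (2 * (et + \<bar>Nt\<bar>)) \<le> \<epsilon> * et^2 / (2 * (et + \<bar>Nt\<bar>)) * (2 * (et + \<bar>Nt\<bar>))"
      using eta(3) pos by (intro mult_right_mono) auto
    also have "\<dots> = \<epsilon> * et^2" using pos by simp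
    finally have "\<eta> * (2 * (et + \<bar>Nt\<bar>)) / et^2 \<le> \<epsilon>" using et by (simp add: divide_le_eq)
    thus ?thesis using d by (intro mult_left_mono) auto
  qed
  finally show ?thesis by (simp add: mult.commute)
qed

lemma ratio_mono:
  fixes K :: "real set" and N e :: "real \<Rightarrow> real" and k a b :: real
  assumes K: "closed K" and aK: "a \<in> K" and bK: "b \<in> K" and Ka: "K \<subseteq> {a..}" and k: "k \<ge> 0"
    and epos: "\<And>x. x \<in> K \<Longrightarrow> e x > 0"
    and scat: "\<And>t s. t \<in> K \<Longrightarrow> s \<in> K \<Longrightarrow> t < s \<Longrightarrow> (\<forall>r\<in>K. t < r \<longrightarrow> s \<le> r) \<Longrightarrow>
        N s \<le> N t * (1 + k * (s - t)) \<and> e s = e t * (1 + k * (s - t))"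
    and dense: "\<And>t \<eta>. t \<in> K \<Longrightarrow> t \<in> closure (K \<inter> {t<..}) \<Longrightarrow> \<eta> > 0 \<Longrightarrow>
        \<exists>\<delta>>0. \<forall>s\<in>K. t < s \<and> s < t + \<delta> \<longrightarrow>
          N s \<le> N t * (1 + k * (s - t)) + \<eta> * (s - t) \<and> \<bar>e s - e t * (1 + k * (s - t))\<bar> \<le> \<eta> * (s - t)"
    and cont: "\<And>t. t \<in> K \<Longrightarrow> a < t \<Longrightarrow> t \<in> closure (K \<inter> {..<t}) \<Longrightarrow>
        (N \<longlongrightarrow> N t) (at t within K \<inter> {..<t}) \<and> (e \<longlongrightarrow> e t) (at t within K \<inter> {..<t})"
  shows "N b / e b \<le> N a / e a"
proof (rule fwd_mono[OF K aK bK Ka, of "\<lambda>x. N x / e x"])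
  fix t s assume ts: "t \<in> K" "s \<in> K" "t < s" "\<forall>r\<in>K. t < r \<longrightarrow> s \<le> r"
  note sc = scat[OF ts]
  have et: "e t > 0" using epos ts by simp
  have q: "1 + k * (s - t) > 0" using k ts by (simp add: add_pos_nonneg)
  have es: "e s > 0" using epos ts by simp
  have "N s / e s \<le> N t * (1 + k * (s - t)) / e s" using sc es by (intro divide_right_mono) auto
  also have "\<dots> = N t / e t" using sc q et by simp
  finally show "N s / e s \<le> N t / e t" .
next
  fix t \<epsilon> :: real assume t: "t \<in> K" "t \<in> closure (K \<inter> {t<..})" and ep: "\<epsilon> > 0"
  have et: "e t > 0" using epos t by simp
  define \<eta> where "\<eta> = min (e t / 2) (\<epsilon> * (e t)^2 / (2 * (e t + \<bar>N t\<bar>)))"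
  have eta: "\<eta> > 0" "\<eta> \<le> e t / 2" "\<eta> \<le> \<epsilon> * (e t)^2 / (2 * (e t + \<bar>N t\<bar>))"
  proof -
    have "\<epsilon> * (e t)^2 / (2 * (e t + \<bar>N t\<bar>)) > 0" using et ep by (intro divide_pos_pos) (auto intro: add_pos_nonneg)
    thus "\<eta> > 0" using et \<eta>_def by simp
    show "\<eta> \<le> e t / 2" unfolding \<eta>_def by (rule min.cobounded1)
    show "\<eta> \<le> \<epsilon> * (e t)^2 / (2 * (e t + \<bar>N t\<bar>))" unfolding \<eta>_def by (rule min.cobounded2)
  qed
  obtain \<delta> where d: "\<delta> > 0" "\<forall>s\<in>K. t < s \<and> s < t + \<delta> \<longrightarrow>
          N s \<le> N t * (1 + k * (s - t)) + \<eta> * (s - t) \<and> \<bar>e s - e t * (1 + k * (s - t))\<bar> \<le> \<eta> * (s - t)"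
    using dense[OF t eta(1)] by blast
  show "\<exists>\<delta>>0. \<forall>s\<in>K. t < s \<and> s < t + \<delta> \<longrightarrow> N s / e s \<le> N t / e t + \<epsilon> * (s - t)"
  proof (rule exI[of _ "min \<delta> 1"], intro conjI ballI impI)
    show "min \<delta> 1 > 0" using d by simp
    fix s assume s: "s \<in> K" "t < s \<and> s < t + min \<delta> 1"
    have "N s / e s - N t / e t \<le> \<epsilon> * (s - t)"
      using d(2) s by (intro ratio_alg[OF et k _ _ eta]) auto
    thus "N s / e s \<le> N t / e t + \<epsilon> * (s - t)" by simp
  qed
next
  fix t assume t: "t \<in> K" "a < t" "t \<in> closure (K \<inter> {..<t})"
  have "e t \<noteq> 0" using epos t by (simp add: less_imp_neq[symmetric])
  thus "((\<lambda>x. N x / e x) \<longlongrightarrow> N t / e t) (at t within K \<inter> {..<t})"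
    using cont[OF t] by (intro tendsto_divide) auto
qed



lemma succ_sigma:
  assumes K: "K = A \<inter> {lo..hi}" and ts: "t \<in> K" "s \<in> K" "t < s" "\<forall>r\<in>K. t < r \<longrightarrow> s \<le> r"
  shows "ts_sigma A t = s"
proof (rule sigma_succ)
  show "s \<in> A" "t < s" using ts K by auto
  show "\<forall>r\<in>A. t < r \<longrightarrow> s \<le> r"
  proof (intro ballI impI)
    fix r assume r: "r \<in> A" "t < r"
    show "s \<le> r"
    proof (cases "r \<le> hi")
      case True hence "r \<in> K" using r ts K by auto
      thus ?thesis using ts r by auto
    next
      case False thus ?thesis using ts K by auto
    qed
  qed
qed

lemma dense_sigma:
  assumes K: "K = A \<inter> {lo..hi}" and t: "t \<in> K" "t \<in> closure (K \<inter> {t<..})"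
  shows "ts_sigma A t = t"
proof (rule sigma_dense, intro allI impI)
  fix \<delta> :: real assume "\<delta> > 0"
  then obtain y where "y \<in> K \<inter> {t<..}" "dist y t < \<delta>" using t(2) unfolding closure_approachable by blast
  thus "\<exists>r\<in>A. t < r \<and> r < t + \<delta>" using K by (auto simp: dist_real_def)
qed

lemma dense_notmax:
  fixes t :: real
  assumes t: "t \<in> closure (K \<inter> {t<..})"
  shows "\<exists>r\<in>K. t < r"
proof -
  have "\<exists>y\<in>K \<inter> {t<..}. dist y t < 1" using t unfolding closure_approachable by simp
  then obtain y where "y \<in> K \<inter> {t<..}" by blast
  thus ?thesis by auto
qed

lemma uniq_ratio:
  fixes T :: "real set" and \<psi> :: "real \<Rightarrow> real" and k c t0 lo hi :: real
  assumes T: "closed T" and k: "k \<ge> 0" and t0: "t0 \<in> T" and lohi: "lo \<in> T" "hi \<in> T" "lo \<le> hi"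
    and der: "\<And>t. t \<in> ts_kappa T \<Longrightarrow> has_delta_derivative T \<psi> (k * \<psi> t) t"
  shows "c * \<psi> hi / phi T k t0 hi \<le> c * \<psi> lo / phi T k t0 lo"
proof -
  define K where "K = T \<inter> {lo..hi}"
  define N where "N = (\<lambda>x. c * \<psi> x)"
  have "N hi / phi T k t0 hi \<le> N lo / phi T k t0 lo"
  proof (rule ratio_mono[of K lo hi k "phi T k t0" N])
    show "closed K" unfolding K_def using T by (intro closed_Int) auto
    show "lo \<in> K" "hi \<in> K" "K \<subseteq> {lo..}" "k \<ge> 0" using lohi k K_def by auto
    show "\<And>x. x \<in> K \<Longrightarrow> phi T k t0 x > 0" using phi_pos K_def by auto
  next
    fix t s assume ts: "t \<in> K" "s \<in> K" "t < s" "\<forall>r\<in>K. t < r \<longrightarrow> s \<le> r"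
    have sg: "ts_sigma T t = s" by (rule succ_sigma[OF K_def ts])
    have tT: "t \<in> T" "s \<in> T" using ts K_def by auto
    have tk: "t \<in> ts_kappa T" using kappa_notmax[OF tT ts(3)] .
    have "\<psi> s = \<psi> t + k * \<psi> t * (s - t)" using D1[OF der[OF tk] tT(1)] sg by simp
    hence "\<psi> s = \<psi> t * (1 + k * (s - t))" by (simp add: algebra_simps)
    hence "N s = N t * (1 + k * (s - t))" unfolding N_def by simp
    moreover have "phi T k t0 s = phi T k t0 t + k * phi T k t0 t * (s - t)"
      using D1[OF phi_deriv[OF T k t0 tT(1)] tT(1)] sg by simp
    ultimately show "N s \<le> N t * (1 + k * (s - t)) \<and> phi T k t0 s = phi T k t0 t * (1 + k * (s - t))"
      by (simp add: algebra_simps)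
  next
    fix t \<eta> :: real assume t: "t \<in> K" "t \<in> closure (K \<inter> {t<..})" and eta: "\<eta> > 0"
    have sg: "ts_sigma T t = t" by (rule dense_sigma[OF K_def t])
    obtain r where r: "r \<in> K" "t < r" using dense_notmax[OF t(2)] by blast
    have tT: "t \<in> T" using t K_def by auto
    have tk: "t \<in> ts_kappa T" using kappa_notmax[OF tT _ r(2)] r K_def by auto
    have eta': "\<eta> / (\<bar>c\<bar> + 1) > 0" using eta by simp
    obtain \<delta>1 where d1: "\<delta>1 > 0" "\<forall>s\<in>T. \<bar>s - t\<bar> < \<delta>1 \<longrightarrow>
        \<bar>\<psi> s - \<psi> t - k * \<psi> t * (s - t)\<bar> \<le> \<eta> / (\<bar>c\<bar> + 1) * \<bar>s - t\<bar>"
      using D2[OF der[OF tk] sg eta'] by blast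
    obtain \<delta>2 where d2: "\<delta>2 > 0" "\<forall>s\<in>T. \<bar>s - t\<bar> < \<delta>2 \<longrightarrow>
        \<bar>phi T k t0 s - phi T k t0 t - k * phi T k t0 t * (s - t)\<bar> \<le> \<eta> * \<bar>s - t\<bar>"
      using D2[OF phi_deriv[OF T k t0 tT] sg eta] by blast
    show "\<exists>\<delta>>0. \<forall>s\<in>K. t < s \<and> s < t + \<delta> \<longrightarrow>
          N s \<le> N t * (1 + k * (s - t)) + \<eta> * (s - t) \<and>
          \<bar>phi T k t0 s - phi T k t0 t * (1 + k * (s - t))\<bar> \<le> \<eta> * (s - t)"
    proof (rule exI[of _ "min \<delta>1 \<delta>2"], intro conjI ballI impI)
      show "min \<delta>1 \<delta>2 > 0" using d1 d2 by simp
      fix s assume s: "s \<in> K" "t < s \<and> s < t + min \<delta>1 \<delta>2"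
      have sT: "s \<in> T" and st: "\<bar>s - t\<bar> = s - t" using s K_def by auto
      have A: "\<bar>\<psi> s - \<psi> t - k * \<psi> t * (s - t)\<bar> \<le> \<eta> / (\<bar>c\<bar> + 1) * (s - t)"
        using d1(2) sT s st by auto
      have "N s - N t * (1 + k * (s - t)) = c * (\<psi> s - \<psi> t - k * \<psi> t * (s - t))"
        unfolding N_def by (simp add: algebra_simps)
      also have "\<dots> \<le> \<bar>c\<bar> * \<bar>\<psi> s - \<psi> t - k * \<psi> t * (s - t)\<bar>" by (metis abs_ge_self abs_mult)
      also have "\<dots> \<le> \<bar>c\<bar> * (\<eta> / (\<bar>c\<bar> + 1) * (s - t))" using A by (intro mult_left_mono) auto
      also have "\<dots> = (\<bar>c\<bar> / (\<bar>c\<bar> + 1)) * (\<eta> * (s - t))" by simp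
      also have "\<dots> \<le> 1 * (\<eta> * (s - t))" using eta s by (intro mult_right_mono) auto
      finally show "N s \<le> N t * (1 + k * (s - t)) + \<eta> * (s - t)" by simp
      have "\<bar>phi T k t0 s - phi T k t0 t - k * phi T k t0 t * (s - t)\<bar> \<le> \<eta> * (s - t)"
        using d2(2) sT s st by auto
      thus "\<bar>phi T k t0 s - phi T k t0 t * (1 + k * (s - t))\<bar> \<le> \<eta> * (s - t)"
        by (simp add: algebra_simps)
    qed
  next
    fix t assume t: "t \<in> K" "lo < t" "t \<in> closure (K \<inter> {..<t})"
    have tT: "t \<in> T" using t K_def by auto
    have tk: "t \<in> ts_kappa T" using kappa_leftlim[OF tT _ t(3)] K_def by auto
    have sub: "K \<inter> {..<t} \<subseteq> T" using K_def by auto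
    have "(\<psi> \<longlongrightarrow> \<psi> t) (at t within K \<inter> {..<t})"
      using D3[OF der[OF tk] tT] sub by (rule tendsto_within_subset)
    hence "(N \<longlongrightarrow> N t) (at t within K \<inter> {..<t})" unfolding N_def by (intro tendsto_intros)
    moreover have "(phi T k t0 \<longlongrightarrow> phi T k t0 t) (at t within K \<inter> {..<t})"
      using D3[OF phi_deriv[OF T k t0 tT] tT] sub by (rule tendsto_within_subset)
    ultimately show "(N \<longlongrightarrow> N t) (at t within K \<inter> {..<t}) \<and>
          (phi T k t0 \<longlongrightarrow> phi T k t0 t) (at t within K \<inter> {..<t})" by simp
  qed
  thus ?thesis unfolding N_def by simp
qed

lemma ts_exp_eq:
  assumes T: "time_scale T" and t0: "t0 \<in> T" and k: "k \<ge> 0"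
  shows "ts_exp T (\<lambda>_. k) t0 = phi T k t0"
proof -
  have Tc: "closed T" using T unfolding time_scale_def by simp
  show ?thesis unfolding ts_exp_def
  proof (rule the_equality)
    show "phi T k t0 t0 = 1 \<and> (\<forall>t\<in>ts_kappa T. has_delta_derivative T (phi T k t0) (k * phi T k t0 t) t) \<and>
        (\<forall>t. t \<notin> T \<longrightarrow> phi T k t0 t = 0)"
      using phi_t0[OF t0, of k] phi_deriv[OF Tc k t0] kappa_sub[of T] by (auto simp: phi_def[of T k t0 "_"])
  next
    fix \<psi> assume h: "\<psi> t0 = 1 \<and> (\<forall>t\<in>ts_kappa T. has_delta_derivative T \<psi> (k * \<psi> t) t) \<and>
        (\<forall>t. t \<notin> T \<longrightarrow> \<psi> t = 0)"
    have der: "\<And>t. t \<in> ts_kappa T \<Longrightarrow> has_delta_derivative T \<psi> (k * \<psi> t) t" using h by auto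
    show "\<psi> = phi T k t0"
    proof
      fix t show "\<psi> t = phi T k t0 t"
      proof (cases "t \<in> T")
        case False thus ?thesis using h unfolding phi_def by auto
      next
        case True
        define lo where "lo = min t t0"
        define hi where "hi = max t t0"
        have lh: "lo \<in> T" "hi \<in> T" "lo \<le> hi" using True t0 lo_def hi_def by (auto simp: min_def max_def)
        have u1: "1 * \<psi> hi / phi T k t0 hi \<le> 1 * \<psi> lo / phi T k t0 lo"
          by (rule uniq_ratio[OF Tc k t0 lh der])
        have u2: "(-1) * \<psi> hi / phi T k t0 hi \<le> (-1) * \<psi> lo / phi T k t0 lo"
          by (rule uniq_ratio[OF Tc k t0 lh der])
        have eq: "\<psi> hi / phi T k t0 hi = \<psi> lo / phi T k t0 lo" using u1 u2 by simp
        have "\<psi> t / phi T k t0 t = \<psi> t0 / phi T k t0 t0"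
          using eq lo_def hi_def by (cases "t \<le> t0") auto
        hence "\<psi> t / phi T k t0 t = 1" using h phi_t0[OF t0] by simp
        thus ?thesis using phi_pos[OF True, of k t0] by (simp add: divide_eq_1_iff)
      qed
    qed
  qed
qed



lemma vec_est:
  fixes Y Y1 ys y1s p q p1 q1 d a b :: real
  assumes p: "\<bar>p\<bar> \<le> p1" and q: "\<bar>q\<bar> \<le> q1" and d: "d \<ge> 0"
    and ys: "ys = Y + Y1 * d + a" and y1s: "y1s = Y1 + (- p * Y1 - q * Y) * d + b"
  shows "sqrt (ys^2 + y1s^2) \<le> sqrt (Y^2 + Y1^2) * (1 + (1 + p1 + q1) * d) + \<bar>a\<bar> + \<bar>b\<bar>"
proof -
  define z where "z = Complex Y Y1"
  define w where "w = Complex Y1 (- p * Y1 - q * Y)"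
  define v where "v = Complex a b"
  have eq: "Complex ys y1s = z + of_real d * w + v"
    unfolding z_def w_def v_def ys y1s by (simp add: complex_eq_iff)
  have zY: "\<bar>Y\<bar> \<le> cmod z" "\<bar>Y1\<bar> \<le> cmod z"
    using abs_Re_le_cmod[of z] abs_Im_le_cmod[of z] z_def by auto
  have "\<bar>- p * Y1 - q * Y\<bar> \<le> \<bar>p\<bar> * \<bar>Y1\<bar> + \<bar>q\<bar> * \<bar>Y\<bar>"
    by (metis abs_minus_cancel abs_mult abs_triangle_ineq4 mult_minus_left)
  also have "\<dots> \<le> p1 * cmod z + q1 * cmod z"
    using p q zY by (intro add_mono mult_mono) auto
  finally have A: "\<bar>- p * Y1 - q * Y\<bar> \<le> p1 * cmod z + q1 * cmod z" .
  have "cmod w \<le> \<bar>Y1\<bar> + \<bar>- p * Y1 - q * Y\<bar>" using cmod_le[of w] w_def by simp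
  also have "\<dots> \<le> (1 + p1 + q1) * cmod z" using A zY by (simp add: algebra_simps)
  finally have wb: "cmod w \<le> (1 + p1 + q1) * cmod z" .
  have "cmod (Complex ys y1s) \<le> cmod z + cmod (of_real d * w) + cmod v"
    unfolding eq by (meson add_mono norm_triangle_ineq order_trans order_refl)
  also have "cmod (of_real d * w) = d * cmod w" using d by (simp add: norm_mult)
  also have "cmod v \<le> \<bar>a\<bar> + \<bar>b\<bar>" using cmod_le[of v] v_def by simp
  also have "d * cmod w \<le> d * ((1 + p1 + q1) * cmod z)" using wb d by (intro mult_left_mono)
  finally have "cmod (Complex ys y1s) \<le> cmod z * (1 + (1 + p1 + q1) * d) + \<bar>a\<bar> + \<bar>b\<bar>"
    by (simp add: algebra_simps)
  thus ?thesis unfolding z_def complex_norm .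
qed



theorem theorem2p4:
  fixes T I :: "real set" and t0 p1 q1 :: real and p q y y1 y2 :: "real \<Rightarrow> real"
  assumes "time_scale T"
    and "is_interval I"
    and "t0 \<in> I \<inter> T"
    and "rd_continuous_on (I \<inter> T) p"
    and "rd_continuous_on (I \<inter> T) q"
    and "p1 \<ge> 0" and "q1 \<ge> 0"
    and "\<And>t. t \<in> ts_kappa (ts_kappa (I \<inter> T)) \<Longrightarrow> t \<ge> t0 \<Longrightarrow> \<bar>p t\<bar> \<le> p1"
    and "\<And>t. t \<in> ts_kappa (ts_kappa (I \<inter> T)) \<Longrightarrow> t \<ge> t0 \<Longrightarrow> \<bar>q t\<bar> \<le> q1"
    and "\<And>t. t \<in> ts_kappa (I \<inter> T) \<Longrightarrow> has_delta_derivative (I \<inter> T) y (y1 t) t"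
    and "\<And>t. t \<in> ts_kappa (ts_kappa (I \<inter> T)) \<Longrightarrow> has_delta_derivative (I \<inter> T) y1 (y2 t) t"
    and "\<And>t. t \<in> ts_kappa (ts_kappa (I \<inter> T)) \<Longrightarrow> y2 t + p t * y1 t + q t * y t = 0"
  shows "\<forall>t\<in>ts_kappa (I \<inter> T). t \<ge> t0 \<longrightarrow>
           sqrt ((y t)\<^sup>2 + (y1 t)\<^sup>2)
             \<le> sqrt ((y t0)\<^sup>2 + (y1 t0)\<^sup>2) * ts_exp T (\<lambda>_. 1 + p1 + q1) t0 t"
proof (intro ballI impI)
  note TS = assms(1) and II = assms(2) and t0S = assms(3) and p1 = assms(6) and q1 = assms(7)
    and pb = assms(8) and qb = assms(9) and dy = assms(10) and dy1 = assms(11) and eqn = assms(12)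
  define S where "S = I \<inter> T"
  define k where "k = 1 + p1 + q1"
  have k0: "k \<ge> 0" using p1 q1 k_def by simp
  have Tc: "closed T" using TS unfolding time_scale_def by simp
  have t0T: "t0 \<in> T" using t0S by simp
  define e where "e = phi T k t0"
  have exp_eq: "ts_exp T (\<lambda>_. 1 + p1 + q1) t0 = e"
    unfolding e_def k_def using ts_exp_eq[OF TS t0T] k0 k_def by simp
  define N where "N = (\<lambda>x. sqrt ((y x)\<^sup>2 + (y1 x)\<^sup>2))"
  fix t1 assume t1k: "t1 \<in> ts_kappa (I \<inter> T)" and t01: "t0 \<le> t1"
  have t1S: "t1 \<in> S" using t1k kappa_sub S_def by auto
  define K where "K = T \<inter> {t0..t1}"
  have KS: "K = S \<inter> {t0..t1}"
  proof -
    have "T \<inter> {t0..t1} \<subseteq> I" using II t0S t1S S_def unfolding is_interval_1 by auto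
    thus ?thesis unfolding K_def S_def by auto
  qed
  have KsubS: "K \<subseteq> S" using KS by auto
  have KsubT: "K \<subseteq> T" using K_def by auto
  have inK1: "r \<in> ts_kappa S" if "r \<in> K" for r
  proof (cases "r = t1")
    case True thus ?thesis using t1k S_def by simp
  next
    case False hence "r < t1" using that K_def by auto
    thus ?thesis using kappa_notmax[of r S t1] that KsubS t1S by auto
  qed
  have inK2: "r \<in> ts_kappa (ts_kappa S)" if "r \<in> K" "s \<in> K" "r < s" for r s
    using kappa_notmax[of r "ts_kappa S" s] inK1 that by auto
  have dyS: "has_delta_derivative S y (y1 r) r" if "r \<in> K" for r
    using dy inK1[OF that] S_def by simp
  have main: "N t1 / e t1 \<le> N t0 / e t0"
  proof (rule ratio_mono[of K t0 t1 k e N])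
    show "closed K" unfolding K_def using Tc by (intro closed_Int) auto
    show "t0 \<in> K" "t1 \<in> K" "K \<subseteq> {t0..}" "k \<ge> 0" using t0T t1S t01 k0 K_def S_def by auto
    show "\<And>x. x \<in> K \<Longrightarrow> e x > 0" using phi_pos K_def e_def by auto
  next
    fix t s assume ts: "t \<in> K" "s \<in> K" "t < s" "\<forall>r\<in>K. t < r \<longrightarrow> s \<le> r"
    have sgS: "ts_sigma S t = s" by (rule succ_sigma[OF KS ts])
    have sgT: "ts_sigma T t = s" by (rule succ_sigma[OF K_def ts])
    have tS: "t \<in> S" using ts KsubS by auto
    have tk2: "t \<in> ts_kappa (ts_kappa S)" using inK2[OF ts(1-3)] .
    have tt0: "t \<ge> t0" using ts K_def by auto
    have ys: "y s = y t + y1 t * (s - t)" using D1[OF dyS[OF ts(1)] tS] sgS by simp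
    have y1s: "y1 s = y1 t + y2 t * (s - t)" using D1[of S y1 "y2 t" t] dy1 tk2 tS sgS S_def by simp
    have "y2 t + p t * y1 t + q t * y t = 0" using eqn tk2 S_def by simp
    hence y2: "y2 t = - p t * y1 t - q t * y t" by linarith
    have "N s \<le> N t * (1 + k * (s - t)) + \<bar>0\<bar> + \<bar>0\<bar>"
      unfolding N_def k_def
      by (rule vec_est[of "p t" p1 "q t" q1]) (use pb qb tk2 tt0 S_def ts ys y1s y2 in auto)
    moreover have "e s = e t * (1 + k * (s - t))"
    proof -
      have tT': "t \<in> T" using ts KsubT by auto
      show ?thesis using D1[OF phi_deriv[OF Tc k0 t0T tT'] tT'] sgT e_def by (simp add: algebra_simps)
    qed
    ultimately show "N s \<le> N t * (1 + k * (s - t)) \<and> e s = e t * (1 + k * (s - t))" by simp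
  next
    fix t \<eta> :: real assume t: "t \<in> K" "t \<in> closure (K \<inter> {t<..})" and eta: "\<eta> > 0"
    have sgS: "ts_sigma S t = t" by (rule dense_sigma[OF KS t])
    have sgT: "ts_sigma T t = t" by (rule dense_sigma[OF K_def t])
    obtain r where r: "r \<in> K" "t < r" using dense_notmax[OF t(2)] by blast
    have tk2: "t \<in> ts_kappa (ts_kappa S)" using inK2[OF t(1) r] .
    have tt0: "t \<ge> t0" and tT: "t \<in> T" using t K_def by auto
    have eta2: "\<eta> / 2 > 0" using eta by simp
    obtain \<delta>1 where d1: "\<delta>1 > 0" "\<forall>s\<in>S. \<bar>s - t\<bar> < \<delta>1 \<longrightarrow>
        \<bar>y s - y t - y1 t * (s - t)\<bar> \<le> \<eta> / 2 * \<bar>s - t\<bar>"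
      using D2[OF dyS[OF t(1)] sgS eta2] by blast
    obtain \<delta>2 where d2: "\<delta>2 > 0" "\<forall>s\<in>S. \<bar>s - t\<bar> < \<delta>2 \<longrightarrow>
        \<bar>y1 s - y1 t - y2 t * (s - t)\<bar> \<le> \<eta> / 2 * \<bar>s - t\<bar>"
      using D2[of S y1 "y2 t" t, OF _ sgS eta2] dy1 tk2 S_def by auto
    obtain \<delta>3 where d3: "\<delta>3 > 0" "\<forall>s\<in>T. \<bar>s - t\<bar> < \<delta>3 \<longrightarrow>
        \<bar>e s - e t - k * e t * (s - t)\<bar> \<le> \<eta> * \<bar>s - t\<bar>"
      using D2[OF phi_deriv[OF Tc k0 t0T tT] sgT eta] e_def by auto
    have "y2 t + p t * y1 t + q t * y t = 0" using eqn tk2 S_def by simp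
    hence y2: "y2 t = - p t * y1 t - q t * y t" by linarith
    show "\<exists>\<delta>>0. \<forall>s\<in>K. t < s \<and> s < t + \<delta> \<longrightarrow>
          N s \<le> N t * (1 + k * (s - t)) + \<eta> * (s - t) \<and> \<bar>e s - e t * (1 + k * (s - t))\<bar> \<le> \<eta> * (s - t)"
    proof (rule exI[of _ "min \<delta>1 (min \<delta>2 \<delta>3)"], intro conjI ballI impI)
      show "min \<delta>1 (min \<delta>2 \<delta>3) > 0" using d1 d2 d3 by simp
      fix s assume s: "s \<in> K" "t < s \<and> s < t + min \<delta>1 (min \<delta>2 \<delta>3)"
      have sS: "s \<in> S" "s \<in> T" and st: "\<bar>s - t\<bar> = s - t" using s KsubS KsubT by auto
      define a where "a = y s - y t - y1 t * (s - t)"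
      define b where "b = y1 s - y1 t - y2 t * (s - t)"
      have ab: "\<bar>a\<bar> \<le> \<eta> / 2 * (s - t)" "\<bar>b\<bar> \<le> \<eta> / 2 * (s - t)"
        using d1(2) d2(2) sS s st a_def b_def by auto
      have "N s \<le> N t * (1 + k * (s - t)) + \<bar>a\<bar> + \<bar>b\<bar>"
        unfolding N_def k_def
        by (rule vec_est[of "p t" p1 "q t" q1]) (use pb qb tk2 tt0 S_def s a_def b_def y2 in auto)
      thus "N s \<le> N t * (1 + k * (s - t)) + \<eta> * (s - t)" using ab by simp
      have "\<bar>e s - e t - k * e t * (s - t)\<bar> \<le> \<eta> * (s - t)" using d3(2) sS s st by auto
      thus "\<bar>e s - e t * (1 + k * (s - t))\<bar> \<le> \<eta> * (s - t)" by (simp add: algebra_simps)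
    qed
  next
    fix t assume t: "t \<in> K" "t0 < t" "t \<in> closure (K \<inter> {..<t})"
    have tS: "t \<in> S" and tT: "t \<in> T" using t KsubS KsubT by auto
    have tk1: "t \<in> ts_kappa S" using kappa_leftlim[OF tS KsubS t(3)] .
    have sub2: "K \<inter> {..<t} \<subseteq> ts_kappa S"
    proof
      fix r assume "r \<in> K \<inter> {..<t}"
      thus "r \<in> ts_kappa S" using inK1 by auto
    qed
    have "t \<in> closure ((K \<inter> {..<t}) \<inter> {..<t})" using t(3) by (simp add: Int_assoc)
    hence tk2: "t \<in> ts_kappa (ts_kappa S)" using kappa_leftlim[OF tk1 sub2] by simp
    have sub: "K \<inter> {..<t} \<subseteq> S" "K \<inter> {..<t} \<subseteq> T" using KsubS KsubT by auto
    have "(y \<longlongrightarrow> y t) (at t within K \<inter> {..<t})"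
      using D3[OF dyS[OF t(1)] tS] sub(1) by (rule tendsto_within_subset)
    moreover have "(y1 \<longlongrightarrow> y1 t) (at t within K \<inter> {..<t})"
    proof -
      have "has_delta_derivative S y1 (y2 t) t" using dy1 tk2 S_def by simp
      thus ?thesis using D3[OF _ tS] sub(1) by (meson tendsto_within_subset)
    qed
    ultimately have "(N \<longlongrightarrow> N t) (at t within K \<inter> {..<t})" unfolding N_def by (intro tendsto_intros)
    moreover have "(e \<longlongrightarrow> e t) (at t within K \<inter> {..<t})"
      using D3[OF phi_deriv[OF Tc k0 t0T tT] tT] sub(2) e_def by (auto intro: tendsto_within_subset)
    ultimately show "(N \<longlongrightarrow> N t) (at t within K \<inter> {..<t}) \<and> (e \<longlongrightarrow> e t) (at t within K \<inter> {..<t})" by simp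
  qed
  have e0: "e t0 = 1" using phi_t0[OF t0T] e_def by simp
  have e1: "e t1 > 0" using phi_pos t1S S_def e_def by auto
  have "N t1 \<le> N t0 * e t1" using main e0 e1 by (simp add: divide_le_eq)
  thus "sqrt ((y t1)\<^sup>2 + (y1 t1)\<^sup>2) \<le> sqrt ((y t0)\<^sup>2 + (y1 t0)\<^sup>2) * ts_exp T (\<lambda>_. 1 + p1 + q1) t0 t1"
    unfolding exp_eq N_def .
qed


end
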